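(* Let $D$ be a squarefree integer and let $K$ be one of $\mathbb{R},\mathbb{Q}_2,\mathbb{Q}_3,\mathbb{Q}_5$. Then $C_D(K)\neq\emptyset$ if and only if $D$ is a square in $K$; explicitly, this means $D>0$, $D\equiv1\pmod 8$, $D\equiv 1\pmod 3$, $D\equiv\pm1\pmod 5$ for $K=\mathbb{R},\mathbb{Q}_2,\mathbb{Q}_3,\mathbb{Q}_5$ respectively.
   Context: $C_D\subset\mathbb{P}^4$ is the curve over $\mathbb{Q}$ given by $X_0^2-2X_1^2+X_2^2=0$, $X_1^2-2X_2^2+DX_3^2=0$, $X_2^2-2DX_3^2+X_4^2=0$. *)

theory Defs
  imports "HOL-Computational_Algebra.Computational_Algebra"
begin

definition CD_f1 :: "'a::comm_ring_1 \<Rightarrow> 'a \<Rightarrow> 'a \<Rightarrow> 'a \<Rightarrow> 'a \<Rightarrow> 'a \<Rightarrow> 'a" where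
  "CD_f1 D x0 x1 x2 x3 x4 = x0^2 - 2*x1^2 + x2^2"
definition CD_f2 :: "'a::comm_ring_1 \<Rightarrow> 'a \<Rightarrow> 'a \<Rightarrow> 'a \<Rightarrow> 'a \<Rightarrow> 'a \<Rightarrow> 'a" where
  "CD_f2 D x0 x1 x2 x3 x4 = x1^2 - 2*x2^2 + D*x3^2"
definition CD_f3 :: "'a::comm_ring_1 \<Rightarrow> 'a \<Rightarrow> 'a \<Rightarrow> 'a \<Rightarrow> 'a \<Rightarrow> 'a \<Rightarrow> 'a" where
  "CD_f3 D x0 x1 x2 x3 x4 = x2^2 - 2*D*x3^2 + x4^2"

definition CD_real_point :: "int \<Rightarrow> bool" where
  "CD_real_point D \<longleftrightarrow> (\<exists>x0 x1 x2 x3 x4 :: real.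
      (x0 \<noteq> 0 \<or> x1 \<noteq> 0 \<or> x2 \<noteq> 0 \<or> x3 \<noteq> 0 \<or> x4 \<noteq> 0) \<and>
      CD_f1 (of_int D) x0 x1 x2 x3 x4 = 0 \<and>
      CD_f2 (of_int D) x0 x1 x2 x3 x4 = 0 \<and>
      CD_f3 (of_int D) x0 x1 x2 x3 x4 = 0)"

text \<open>The p-adic integers Z_p as the inverse limit of Z/p^n Z: compatible sequences of
  residues x n in {0..<p^n}.\<close>
definition padic_ints :: "int \<Rightarrow> (nat \<Rightarrow> int) set" where
  "padic_ints p = {x. \<forall>n. 0 \<le> x n \<and> x n < p^n \<and> x (Suc n) mod p^n = x n}"

text \<open>C_D(Q_p) nonempty: every point of P^4(Q_p) has a primitive representative in Z_p
  (some coordinate a unit, i.e. nonzero mod p); the equations hold in Z_p iff they hold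
  modulo p^n at every level n.\<close>
definition CD_padic_point :: "int \<Rightarrow> int \<Rightarrow> bool" where
  "CD_padic_point p D \<longleftrightarrow> (\<exists>x0\<in>padic_ints p. \<exists>x1\<in>padic_ints p. \<exists>x2\<in>padic_ints p.
      \<exists>x3\<in>padic_ints p. \<exists>x4\<in>padic_ints p.
      (x0 1 \<noteq> 0 \<or> x1 1 \<noteq> 0 \<or> x2 1 \<noteq> 0 \<or> x3 1 \<noteq> 0 \<or> x4 1 \<noteq> 0) \<and>
      (\<forall>n. p^n dvd CD_f1 D (x0 n) (x1 n) (x2 n) (x3 n) (x4 n) \<and>
           p^n dvd CD_f2 D (x0 n) (x1 n) (x2 n) (x3 n) (x4 n) \<and>
           p^n dvd CD_f3 D (x0 n) (x1 n) (x2 n) (x3 n) (x4 n)))"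

text \<open>An integer D is a square in Q_p iff it is a square of a p-adic integer
  (a square root of an integer has nonnegative valuation).\<close>
definition padic_square :: "int \<Rightarrow> int \<Rightarrow> bool" where
  "padic_square p D \<longleftrightarrow> (\<exists>u\<in>padic_ints p. \<forall>n. p^n dvd (u n)^2 - D)"

definition real_square :: "int \<Rightarrow> bool" where
  "real_square D \<longleftrightarrow> (\<exists>r::real. r^2 = of_int D)"

end

theory Submission
  imports Defs "HOL-Number_Theory.Number_Theory"
begin

lemma padic_compat:
  assumes "x \<in> padic_ints p" "m \<le> n"
  shows "x n mod p^m = x m"
  using assms(2)
proof (induction n rule: dec_induct)
  case base
  from assms(1) have "0 \<le> x m" "x m < p^m" unfolding padic_ints_def by auto
  then show ?case by simp
next
  case (step n)
  have "p^m dvd p^n" using step(1) by (simp add: le_imp_power_dvd)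
  then have "x (Suc n) mod p^m = (x (Suc n) mod p^n) mod p^m" by (simp add: mod_mod_cancel)
  also have "x (Suc n) mod p^n = x n" using assms(1) unfolding padic_ints_def by auto
  finally show ?case using step by simp
qed

lemma padic_unit:
  assumes "x \<in> padic_ints p" "x 1 \<noteq> 0" "1 \<le> n"
  shows "\<not> p dvd x n"
  using padic_compat[OF assms(1) assms(3)] assms(2) by (simp add: dvd_eq_mod_eq_0)

lemma modA: "((A::int) - 2*B + C*E) mod m = (A mod m - 2*(B mod m) + (C mod m)*(E mod m)) mod m"
proof -
  have "[A mod m - 2*(B mod m) + (C mod m)*(E mod m) = A - 2*B + C*E] (mod m)"
    by (intro cong_add cong_diff cong_mult cong_refl) (simp_all add: cong_def)
  then show ?thesis by (simp add: cong_def)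
qed

lemma modB: "((A::int) - 2*C*E + B) mod m = (A mod m - 2*(C mod m)*(E mod m) + B mod m) mod m"
proof -
  have "[A mod m - 2*(C mod m)*(E mod m) + B mod m = A - 2*C*E + B] (mod m)"
    by (intro cong_add cong_diff cong_mult cong_refl) (simp_all add: cong_def)
  then show ?thesis by (simp add: cong_def)
qed

lemma modC: "((A::int) - 2*B + E) mod m = (A mod m - 2*(B mod m) + E mod m) mod m"
proof -
  have "[A mod m - 2*(B mod m) + E mod m = A - 2*B + E] (mod m)"
    by (intro cong_add cong_diff cong_mult cong_refl) (simp_all add: cong_def)
  then show ?thesis by (simp add: cong_def)
qed

lemma sq_mod_reduce: "(y::int)^2 mod m = (y mod m)^2 mod m"
  by (simp add: power_mod)

lemma sq8: "(y::int)^2 mod 8 \<in> {0,1,4} \<and> (y^2 mod 8 = 1 \<longleftrightarrow> odd y)"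
proof -
  have k: "y mod 8 \<in> {0,1,2,3,4,5,6,7}" by auto
  have o: "odd y \<longleftrightarrow> odd (y mod 8)" by presburger
  show ?thesis using k unfolding sq_mod_reduce[of y 8] o by (elim insertE emptyE) simp_all
qed

lemma sq3: "(y::int)^2 mod 3 \<in> {0,1} \<and> (y^2 mod 3 = 0 \<longleftrightarrow> 3 dvd y)"
proof -
  have k: "y mod 3 \<in> {0,1,2}" by auto
  have o: "3 dvd y \<longleftrightarrow> y mod 3 = 0" by auto
  show ?thesis using k unfolding sq_mod_reduce[of y 3] o by (elim insertE emptyE) simp_all
qed

lemma sq5: "(y::int)^2 mod 5 \<in> {0,1,4} \<and> (y^2 mod 5 = 0 \<longleftrightarrow> 5 dvd y)"
proof -
  have k: "y mod 5 \<in> {0,1,2,3,4}" by auto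
  have o: "5 dvd y \<longleftrightarrow> y mod 5 = 0" by auto
  show ?thesis using k unfolding sq_mod_reduce[of y 5] o by (elim insertE emptyE) simp_all
qed

lemma fin8: "\<forall>d\<in>{2,3,5,6,7::int}. \<forall>a0\<in>{0,1,4::int}. \<forall>a1\<in>{0,1,4::int}. \<forall>a2\<in>{0,1,4::int}.
   (a0 - 2*a1 + a2) mod 8 = 0 \<longrightarrow> (\<forall>a3\<in>{0,1,4::int}. (a1 - 2*a2 + d*a3) mod 8 = 0 \<longrightarrow>
   (\<forall>a4\<in>{0,1,4::int}. (a2 - 2*d*a3 + a4) mod 8 = 0 \<longrightarrow>
   a0 \<noteq> 1 \<and> a1 \<noteq> 1 \<and> a2 \<noteq> 1 \<and> a3 \<noteq> 1 \<and> a4 \<noteq> 1))"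
  by simp

lemma fin3: "\<forall>d\<in>{0,2::int}. \<forall>a0\<in>{0,1::int}. \<forall>a1\<in>{0,1::int}. \<forall>a2\<in>{0,1::int}.
   (a0 - 2*a1 + a2) mod 3 = 0 \<longrightarrow> (\<forall>a3\<in>{0,1::int}. (a1 - 2*a2 + d*a3) mod 3 = 0 \<longrightarrow>
   (\<forall>a4\<in>{0,1::int}. (a2 - 2*d*a3 + a4) mod 3 = 0 \<longrightarrow>
   a0 = 0 \<and> a1 = 0 \<and> a2 = 0 \<and> a4 = 0 \<and> (d \<noteq> 0 \<longrightarrow> a3 = 0)))"
  by simp

lemma fin5: "\<forall>d\<in>{0,2,3::int}. \<forall>a0\<in>{0,1,4::int}. \<forall>a1\<in>{0,1,4::int}. \<forall>a2\<in>{0,1,4::int}.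
   (a0 - 2*a1 + a2) mod 5 = 0 \<longrightarrow> (\<forall>a3\<in>{0,1,4::int}. (a1 - 2*a2 + d*a3) mod 5 = 0 \<longrightarrow>
   (\<forall>a4\<in>{0,1,4::int}. (a2 - 2*d*a3 + a4) mod 5 = 0 \<longrightarrow>
   a0 = 0 \<and> a1 = 0 \<and> a2 = 0 \<and> a4 = 0 \<and> (d \<noteq> 0 \<longrightarrow> a3 = 0)))"
  by simp

lemma test_prime: "prime (3::int)" "prime (5::int)" "prime (2::int)"
  by (simp_all add: prime_int_numeral_eq)

lemma sqf_no_sq:
  fixes D p :: int
  assumes "squarefree D" "p > 1" "p^2 dvd D" shows False
proof -
  have "p dvd 1" using squarefreeD[OF assms(1,3)] .
  then show False using assms(2) by (simp add: zdvd1_eq)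
qed

lemma f_res:
  fixes y0 y1 y2 y3 y4 D m :: int
  assumes "m dvd CD_f1 D y0 y1 y2 y3 y4" "m dvd CD_f2 D y0 y1 y2 y3 y4" "m dvd CD_f3 D y0 y1 y2 y3 y4"
  shows "(y0^2 mod m - 2*(y1^2 mod m) + y2^2 mod m) mod m = 0"
    "(y1^2 mod m - 2*(y2^2 mod m) + (D mod m)*(y3^2 mod m)) mod m = 0"
    "(y2^2 mod m - 2*(D mod m)*(y3^2 mod m) + y4^2 mod m) mod m = 0"
  using assms(1) unfolding CD_f1_def dvd_eq_mod_eq_0 modC[of "y0^2" "y1^2" "y2^2" m] apply assumption
  using assms(2) unfolding CD_f2_def dvd_eq_mod_eq_0 modA[of "y1^2" "y2^2" D "y3^2" m] apply assumption
  using assms(3) unfolding CD_f3_def dvd_eq_mod_eq_0 modB[of "y2^2" D "y3^2" "y4^2" m] by assumption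

lemma deep:
  fixes p D y1 y2 y3 :: int
  assumes "prime p" "p^2 dvd y1^2 - 2*y2^2 + D*y3^2" "p dvd y1" "p dvd y2" "\<not> p dvd y3"
  shows "p^2 dvd D"
proof -
  have a: "p^2 dvd y1^2" "p^2 dvd y2^2" using assms(3,4) by (simp_all add: dvd_power_same)
  have e: "D*y3^2 = (y1^2 - 2*y2^2 + D*y3^2) - y1^2 + 2*y2^2" by simp
  have "p^2 dvd D*y3^2" by (subst e) (intro dvd_add dvd_diff dvd_mult assms(2) a)
  moreover have "coprime p y3" using assms(1,5) by (simp add: prime_imp_coprime)
  then have "coprime (p^2) (y3^2)" by simp
  ultimately show ?thesis by (simp add: coprime_dvd_mult_left_iff)
qed

lemma padic_get:
  assumes "CD_padic_point p D" "p > 1" "1 \<le> k"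
  shows "\<exists>y0 y1 y2 y3 y4. p^k dvd CD_f1 D y0 y1 y2 y3 y4 \<and> p^k dvd CD_f2 D y0 y1 y2 y3 y4 \<and>
     p^k dvd CD_f3 D y0 y1 y2 y3 y4 \<and> \<not> (p dvd y0 \<and> p dvd y1 \<and> p dvd y2 \<and> p dvd y3 \<and> p dvd y4)"
proof -
  obtain x0 x1 x2 x3 x4 where xs: "x0 \<in> padic_ints p" "x1 \<in> padic_ints p" "x2 \<in> padic_ints p"
     "x3 \<in> padic_ints p" "x4 \<in> padic_ints p" and
    prim: "x0 1 \<noteq> 0 \<or> x1 1 \<noteq> 0 \<or> x2 1 \<noteq> 0 \<or> x3 1 \<noteq> 0 \<or> x4 1 \<noteq> 0" and
    eq: "\<forall>n. p^n dvd CD_f1 D (x0 n) (x1 n) (x2 n) (x3 n) (x4 n) \<and>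
           p^n dvd CD_f2 D (x0 n) (x1 n) (x2 n) (x3 n) (x4 n) \<and>
           p^n dvd CD_f3 D (x0 n) (x1 n) (x2 n) (x3 n) (x4 n)"
    using assms(1) unfolding CD_padic_point_def by blast
  have "\<not> (p dvd x0 k \<and> p dvd x1 k \<and> p dvd x2 k \<and> p dvd x3 k \<and> p dvd x4 k)"
    using prim padic_unit[OF xs(1) _ assms(3)] padic_unit[OF xs(2) _ assms(3)] padic_unit[OF xs(3) _ assms(3)]
      padic_unit[OF xs(4) _ assms(3)] padic_unit[OF xs(5) _ assms(3)] by blast
  then show ?thesis using eq by blast
qed

lemma cd2:
  fixes D :: int
  assumes sf: "squarefree D" and cd: "CD_padic_point 2 D" shows "D mod 8 = 1"
proof -
  obtain y0 y1 y2 y3 y4 where d: "8 dvd CD_f1 D y0 y1 y2 y3 y4" "8 dvd CD_f2 D y0 y1 y2 y3 y4"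
     "8 dvd CD_f3 D y0 y1 y2 y3 y4" and np: "\<not> (2 dvd y0 \<and> 2 dvd y1 \<and> 2 dvd y2 \<and> 2 dvd y3 \<and> 2 dvd y4)"
    using padic_get[OF cd, of 3] by auto
  note r = f_res[OF d]
  have n4: "D mod 8 \<noteq> 0" "D mod 8 \<noteq> 4"
  proof -
    have "\<not> (4::int) dvd D" using sqf_no_sq[OF sf, of 2] by auto
    then show "D mod 8 \<noteq> 0" "D mod 8 \<noteq> 4" by presburger+
  qed
  show ?thesis
  proof (rule ccontr)
    assume "D mod 8 \<noteq> 1"
    then have dm: "D mod 8 \<in> {2,3,5,6,7}" using n4 by auto
    have "y0^2 mod 8 \<noteq> 1 \<and> y1^2 mod 8 \<noteq> 1 \<and> y2^2 mod 8 \<noteq> 1 \<and> y3^2 mod 8 \<noteq> 1 \<and> y4^2 mod 8 \<noteq> 1"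
      using fin8[rule_format, OF dm conjunct1[OF sq8] conjunct1[OF sq8] conjunct1[OF sq8] r(1)
        conjunct1[OF sq8] r(2) conjunct1[OF sq8] r(3)] .
    then show False using np sq8 by auto
  qed
qed

lemma cd_odd:
  fixes D p :: int
  assumes sf: "squarefree D" and p: "prime p" and cd: "CD_padic_point p D"
    and fin: "\<And>y0 y1 y2 y3 y4. p dvd CD_f1 D y0 y1 y2 y3 y4 \<Longrightarrow> p dvd CD_f2 D y0 y1 y2 y3 y4 \<Longrightarrow>
       p dvd CD_f3 D y0 y1 y2 y3 y4 \<Longrightarrow> D mod p \<notin> G \<Longrightarrow>
       p dvd y0 \<and> p dvd y1 \<and> p dvd y2 \<and> p dvd y4 \<and> (D mod p \<noteq> 0 \<longrightarrow> p dvd y3)"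
  shows "D mod p \<in> G"
proof (rule ccontr)
  assume nd: "\<not> ?thesis"
  have p1: "p > 1" using p by (simp add: prime_gt_1_int)
  obtain y0 y1 y2 y3 y4 where d: "p^2 dvd CD_f1 D y0 y1 y2 y3 y4" "p^2 dvd CD_f2 D y0 y1 y2 y3 y4"
     "p^2 dvd CD_f3 D y0 y1 y2 y3 y4" and np: "\<not> (p dvd y0 \<and> p dvd y1 \<and> p dvd y2 \<and> p dvd y3 \<and> p dvd y4)"
    using padic_get[OF cd p1, of 2] by auto
  have pp: "p dvd p^2" by (simp add: power2_eq_square)
  have H: "p dvd y0 \<and> p dvd y1 \<and> p dvd y2 \<and> p dvd y4 \<and> (D mod p \<noteq> 0 \<longrightarrow> p dvd y3)"
    using fin[OF dvd_trans[OF pp d(1)] dvd_trans[OF pp d(2)] dvd_trans[OF pp d(3)]] nd by blast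
  show False
  proof (cases "D mod p = 0")
    case False then show ?thesis using H np by blast
  next
    case True
    have n3: "\<not> p dvd y3" using H np by blast
    have "p^2 dvd y1^2 - 2*y2^2 + D*y3^2" using d(2) unfolding CD_f2_def .
    then have "p^2 dvd D" using deep[OF p _ _ _ n3] H by blast
    then show False using sqf_no_sq[OF sf p1] by blast
  qed
qed

lemma fin3_app:
  fixes D :: int
  assumes "3 dvd CD_f1 D y0 y1 y2 y3 y4" "3 dvd CD_f2 D y0 y1 y2 y3 y4"
       "3 dvd CD_f3 D y0 y1 y2 y3 y4" "D mod 3 \<notin> {1}"
  shows "3 dvd y0 \<and> 3 dvd y1 \<and> 3 dvd y2 \<and> 3 dvd y4 \<and> (D mod 3 \<noteq> 0 \<longrightarrow> 3 dvd y3)"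
proof -
  note r = f_res[OF assms(1-3)]
  have dm: "D mod 3 \<in> {0,2}" using assms(4) by auto
  show ?thesis
    using fin3[rule_format, OF dm conjunct1[OF sq3] conjunct1[OF sq3] conjunct1[OF sq3] r(1)
        conjunct1[OF sq3] r(2) conjunct1[OF sq3] r(3)] sq3 by auto
qed


lemma fin5_app:
  fixes D :: int
  assumes "5 dvd CD_f1 D y0 y1 y2 y3 y4" "5 dvd CD_f2 D y0 y1 y2 y3 y4"
       "5 dvd CD_f3 D y0 y1 y2 y3 y4" "D mod 5 \<notin> {1,4}"
  shows "5 dvd y0 \<and> 5 dvd y1 \<and> 5 dvd y2 \<and> 5 dvd y4 \<and> (D mod 5 \<noteq> 0 \<longrightarrow> 5 dvd y3)"
proof -
  note r = f_res[OF assms(1-3)]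
  have dm: "D mod 5 \<in> {0,2,3}" using assms(4) by auto
  show ?thesis
    using fin5[rule_format, OF dm conjunct1[OF sq5] conjunct1[OF sq5] conjunct1[OF sq5] r(1)
        conjunct1[OF sq5] r(2) conjunct1[OF sq5] r(3)] sq5 by auto
qed

lemma cd3: "squarefree D \<Longrightarrow> CD_padic_point 3 D \<Longrightarrow> D mod 3 = 1"
  using cd_odd[of D 3 "{1}"] fin3_app test_prime by blast

lemma cd5: "squarefree D \<Longrightarrow> CD_padic_point 5 D \<Longrightarrow> D mod 5 = 1 \<or> D mod 5 = 4"
  using cd_odd[of D 5 "{1,4}"] fin5_app test_prime by blast

lemma dep_seq:
  assumes "P 0 x0" "\<And>n x. P n x \<Longrightarrow> \<exists>y. P (Suc n) y \<and> R n x y"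
  shows "\<exists>r. \<forall>n. P n (r n) \<and> R n (r n) (r (Suc n))"
proof -
  define r where "r = rec_nat x0 (\<lambda>n x. SOME y. P (Suc n) y \<and> R n x y)"
  have r0: "r 0 = x0" and rS: "\<And>n. r (Suc n) = (SOME y. P (Suc n) y \<and> R n (r n) y)"
    by (simp_all add: r_def)
  have P: "P n (r n)" for n
  proof (induction n)
    case 0 then show ?case using assms(1) r0 by simp
  next
    case (Suc n)
    from someI_ex[OF assms(2)[OF Suc]] show ?case by (simp add: rS)
  qed
  have "R n (r n) (r (Suc n))" for n using someI_ex[OF assms(2)[OF P[of n]]] by (simp add: rS)
  with P show ?thesis by blast
qed

lemma square_from_seq:
  fixes p D :: int and r :: "nat \<Rightarrow> int"
  assumes "p > 1" "\<And>n. p^n dvd r n ^2 - D" "\<And>n. r (Suc n) mod p^n = r n mod p^n"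
  shows "padic_square p D"
proof -
  define u where "u n = r n mod p^n" for n
  have pos: "p^n > 0" for n using assms(1) by simp
  have "u \<in> padic_ints p"
    unfolding padic_ints_def
  proof (safe)
    fix n
    show "0 \<le> u n" "u n < p^n" using pos[of n] by (simp_all add: u_def)
    have "p^n dvd p^(Suc n)" by (simp add: le_imp_power_dvd)
    then show "u (Suc n) mod p^n = u n" unfolding u_def using assms(3) by (simp add: mod_mod_cancel)
  qed
  moreover have "p^n dvd u n^2 - D" for n
  proof -
    have a: "p^n dvd u n - r n" unfolding u_def using mod_eq_dvd_iff[of "r n mod p^n" "p^n" "r n"] by simp
    have e: "u n^2 - D = (u n - r n)*(u n + r n) + (r n^2 - D)" by (simp add: algebra_simps power2_eq_square)
    show ?thesis unfolding e using a assms(2)[of n] by (intro dvd_add dvd_mult2) auto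
  qed
  ultimately show ?thesis unfolding padic_square_def by blast
qed

lemma hensel_odd:
  fixes p D x :: int
  assumes p: "prime p" "\<not> p dvd 2" and n: "n = Suc k" and h: "p^n dvd x^2 - D" and u: "\<not> p dvd x"
  shows "\<exists>y. p^(Suc n) dvd y^2 - D \<and> \<not> p dvd y \<and> y mod p^n = x mod p^n"
proof -
  obtain c where c: "x^2 - D = p^n * c" using h by (auto elim: dvdE)
  have "\<not> p dvd 2*x" using p u by (simp add: prime_dvd_mult_iff)
  then have "coprime p (2*x)" using prime_imp_coprime[OF p(1)] by blast
  then have "gcd (2*x) p = 1" by (simp add: coprime_iff_gcd_eq_1 gcd.commute)
  then obtain s t where st: "s*(2*x) + t*p = 1" using bezout_int[of "2*x" p] by auto
  define y where "y = x - c*s*p^n"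
  have e1: "y^2 - D = (x^2 - D) - 2*x*s*c*p^n + c^2*s^2*p^n*p^n"
    by (simp add: y_def power2_eq_square algebra_simps)
  have e2: "2*x*s = 1 - t*p" using st by (simp add: algebra_simps)
  have e3: "y^2 - D = p^(Suc n) * (c*t + c^2*s^2*p^k)"
  proof -
    have "y^2 - D = p^n*c - (1 - t*p)*c*p^n + c^2*s^2*p^n*p^n" unfolding e1 c e2[symmetric] by simp
    also have "\<dots> = p^(Suc n) * (c*t + c^2*s^2*p^k)" unfolding n by (simp add: algebra_simps)
    finally show ?thesis .
  qed
  have "p dvd c*s*p^n" unfolding n by simp
  have "\<not> p dvd y"
  proof
    assume "p dvd y"
    then have "p dvd y + c*s*p^n" using \<open>p dvd c*s*p^n\<close> by (rule dvd_add)
    then show False using u by (simp add: y_def)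
  qed
  moreover have "y mod p^n = x mod p^n"
    unfolding mod_eq_dvd_iff y_def by simp
  ultimately show ?thesis using e3 by (intro exI[of _ y]) auto
qed

lemma odd_square:
  fixes p D r0 :: int
  assumes p: "prime p" "\<not> p dvd 2" and r0: "p dvd r0^2 - D" "\<not> p dvd r0"
  shows "padic_square p D"
proof -
  have "\<exists>r. \<forall>n. (p^n dvd r n^2 - D \<and> \<not> p dvd r n) \<and> r (Suc n) mod p^n = r n mod p^n"
  proof (rule dep_seq[of "\<lambda>n x. p^n dvd x^2 - D \<and> \<not> p dvd x" r0 "\<lambda>n x y. y mod p^n = x mod p^n"])
    show "p^0 dvd r0^2 - D \<and> \<not> p dvd r0" using r0 by simp
  next
    fix n x assume hx: "p^n dvd x^2 - D \<and> \<not> p dvd x"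
    show "\<exists>y. (p^Suc n dvd y^2 - D \<and> \<not> p dvd y) \<and> y mod p^n = x mod p^n"
    proof (cases n)
      case 0 then show ?thesis using r0 by (intro exI[of _ r0]) simp
    next
      case (Suc k) then show ?thesis using hensel_odd[OF p Suc] hx by blast
    qed
  qed
  then obtain r where "\<And>n. p^n dvd r n^2 - D" "\<And>n. r (Suc n) mod p^n = r n mod p^n" by blast
  then show ?thesis using square_from_seq[of p r D] p by (simp add: prime_gt_1_int)
qed

lemma two_step:
  fixes D x :: int
  assumes d: "D mod 8 = 1" and h: "2^(Suc n) dvd x^2 - D" and o: "odd x"
  shows "\<exists>y. 2^(Suc (Suc n)) dvd y^2 - D \<and> odd y \<and> y mod 2^n = x mod 2^n"
proof (cases "2^(Suc (Suc n)) dvd x^2 - D")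
  case True then show ?thesis using o by blast
next
  case False
  have x8: "8 dvd x^2 - D" using sq8[of x] o d by (simp add: mod_eq_dvd_iff[symmetric])
  have n2: "n \<ge> 2"
  proof (rule ccontr)
    assume "\<not> n \<ge> 2"
    then have "n = 0 \<or> n = 1" by auto
    then have "2^(Suc (Suc n)) dvd (8::int)" by auto
    then show False using False x8 dvd_trans by blast
  qed
  define m where "m = n - 2"
  have m: "n = Suc (Suc m)" using n2 unfolding m_def by simp
  obtain c where c: "x^2 - D = 2^(Suc n) * c" using h by (auto elim: dvdE)
  have "odd c"
  proof
    assume "even c" then obtain e where "c = 2*e" by auto
    then have "x^2 - D = 2^(Suc (Suc n)) * e" using c by simp
    then show False using False by simp
  qed
  then have "even (c + x)" using o by simp
  then obtain e where e: "c + x = 2*e" by (rule evenE)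
  define y where "y = x + 2^n"
  have "y^2 - D = (x^2 - D) + 2^(Suc n)*x + 2^n*2^n" by (simp add: y_def power2_eq_square algebra_simps)
  also have "\<dots> = 2^(Suc n)*(c + x) + 2^n*2^n" unfolding c by (simp add: algebra_simps)
  also have "\<dots> = 2^(Suc (Suc n))*(e + 2^m)" unfolding e m by (simp add: algebra_simps)
  finally have "2^(Suc (Suc n)) dvd y^2 - D" by simp
  moreover have "odd y" using o unfolding y_def m by simp
  moreover have "y mod 2^n = x mod 2^n" unfolding y_def by simp
  ultimately show ?thesis by blast
qed

lemma two_square:
  fixes D :: int
  assumes d: "D mod 8 = 1"
  shows "padic_square 2 D"
proof -
  have "\<exists>r. \<forall>n. (2^(Suc n) dvd r n^2 - D \<and> odd (r n)) \<and> r (Suc n) mod 2^n = r n mod 2^n"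
  proof (rule dep_seq[of "\<lambda>n x. 2^(Suc n) dvd x^2 - D \<and> odd x" 1 "\<lambda>n x y. y mod 2^n = x mod 2^n"])
    have "2 dvd 1 - D" using d by presburger
    then show "2^(Suc 0) dvd 1^2 - D \<and> odd (1::int)" by simp
  next
    fix n x assume "2^(Suc n) dvd x^2 - D \<and> odd x"
    then show "\<exists>y. (2^(Suc (Suc n)) dvd y^2 - D \<and> odd y) \<and> y mod 2^n = x mod 2^n"
      using two_step[OF d] by blast
  qed
  then obtain r where r: "\<And>n. 2^(Suc n) dvd r n^2 - D" "\<And>n. r (Suc n) mod 2^n = r n mod 2^n" by blast
  have "(2::int)^n dvd r n^2 - D" for n
    using dvd_trans[OF _ r(1)[of n], of "2^n"] by (simp add: le_imp_power_dvd)
  then show ?thesis using square_from_seq[of 2 r D] r(2) by simp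
qed

lemma sq_to_cd:
  fixes p D :: int
  assumes p: "p > 1" and sq: "padic_square p D" shows "CD_padic_point p D"
proof -
  obtain u where u: "u \<in> padic_ints p" "\<And>n. p^n dvd u n^2 - D"
    using sq unfolding padic_square_def by blast
  define one where "one n = 1 mod p^n" for n
  have pos: "p^n > 0" for n using p by simp
  have one: "one \<in> padic_ints p"
    unfolding padic_ints_def
  proof (safe)
    fix n
    show "0 \<le> one n" "one n < p^n" using pos[of n] by (simp_all add: one_def)
    have "p^n dvd p^(Suc n)" by (simp add: le_imp_power_dvd)
    then show "one (Suc n) mod p^n = one n" unfolding one_def by (simp add: mod_mod_cancel)
  qed
  have one1: "one 1 \<noteq> 0" using p by (simp add: one_def)
  have eqs: "p^n dvd CD_f1 D (u n) (u n) (u n) (one n) (u n) \<and>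
           p^n dvd CD_f2 D (u n) (u n) (u n) (one n) (u n) \<and>
           p^n dvd CD_f3 D (u n) (u n) (u n) (one n) (u n)" for n
  proof -
    have a: "p^n dvd one n - 1" unfolding one_def using mod_eq_dvd_iff[of "1 mod p^n" "p^n" 1] by simp
    have b: "p^n dvd one n^2 - 1"
    proof -
      have "one n^2 - 1 = (one n - 1)*(one n + 1)" by (simp add: algebra_simps power2_eq_square)
      then show ?thesis using a by simp
    qed
    have e2: "CD_f2 D (u n) (u n) (u n) (one n) (u n) = D*(one n^2 - 1) - (u n^2 - D)"
      unfolding CD_f2_def by (simp add: algebra_simps)
    have e3: "CD_f3 D (u n) (u n) (u n) (one n) (u n) = 2*(u n^2 - D) - (2*D)*(one n^2 - 1)"
      unfolding CD_f3_def by (simp add: algebra_simps)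
    have e1: "CD_f1 D (u n) (u n) (u n) (one n) (u n) = 0" unfolding CD_f1_def by simp
    show ?thesis unfolding e1 e2 e3
      by (intro conjI dvd_0_right dvd_diff dvd_mult b u(2))
  qed
  show ?thesis unfolding CD_padic_point_def using u(1) one one1 eqs by blast
qed

lemma psq2: fixes D :: int assumes sf: "squarefree D" "padic_square 2 D" shows "D mod 8 = 1"
proof -
  obtain u where u: "\<And>n. 2^n dvd u n^2 - D" using assms(2) unfolding padic_square_def by blast
  have "8 dvd u 3^2 - D" using u[of 3] by simp
  then have e: "D mod 8 = u 3^2 mod 8" by (simp add: mod_eq_dvd_iff dvd_diff_commute)
  have "\<not> (4::int) dvd D" using sqf_no_sq[OF sf(1), of 2] by auto
  then have "D mod 8 \<noteq> 0" "D mod 8 \<noteq> 4" by presburger+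
  then show ?thesis using e sq8[of "u 3"] by auto
qed

lemma psq_gen: fixes D p :: int
  assumes sf: "squarefree D" and sq: "padic_square p D" and p: "prime p"
  shows "\<exists>v. D mod p = v^2 mod p \<and> \<not> p dvd v"
proof -
  obtain u where u: "\<And>n. p^n dvd u n^2 - D" using sq unfolding padic_square_def by blast
  have p1: "p > 1" using p by (simp add: prime_gt_1_int)
  have h2: "p^2 dvd u 2^2 - D" using u[of 2] by simp
  have pp: "p dvd p^2" by (simp add: power2_eq_square)
  have h1: "p dvd u 2^2 - D" using dvd_trans[OF pp h2] .
  have "\<not> p dvd u 2"
  proof
    assume "p dvd u 2"
    then have "p^2 dvd u 2^2" by (simp add: dvd_power_same)
    then have "p^2 dvd u 2^2 - (u 2^2 - D)" using h2 by (rule dvd_diff)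
    then have "p^2 dvd D" by simp
    then show False using sqf_no_sq[OF sf p1] by blast
  qed
  moreover have "D mod p = u 2^2 mod p" using h1 by (simp add: mod_eq_dvd_iff dvd_diff_commute)
  ultimately show ?thesis by blast
qed

lemma psq3: fixes D :: int assumes "squarefree D" "padic_square 3 D" shows "D mod 3 = 1"
proof -
  obtain v where "D mod 3 = v^2 mod 3" "\<not> 3 dvd v" using psq_gen[OF assms test_prime(1)] by blast
  then show ?thesis using sq3[of v] by auto
qed

lemma psq5: fixes D :: int assumes "squarefree D" "padic_square 5 D" shows "D mod 5 = 1 \<or> D mod 5 = 4"
proof -
  obtain v where "D mod 5 = v^2 mod 5" "\<not> 5 dvd v" using psq_gen[OF assms test_prime(2)] by blast
  then show ?thesis using sq5[of v] by auto
qed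

lemma sq3_cond: fixes D :: int assumes "D mod 3 = 1" shows "padic_square 3 D"
proof (rule odd_square[of 3 1 D])
  show "prime (3::int)" by (rule test_prime(1))
  show "\<not> (3::int) dvd 2" by simp
  show "\<not> (3::int) dvd 1" by simp
  have "3 dvd 1 - D" using assms by presburger
  then show "3 dvd 1^2 - D" by simp
qed

lemma sq5_cond: fixes D :: int assumes "D mod 5 = 1 \<or> D mod 5 = 4" shows "padic_square 5 D"
proof -
  have "\<exists>r0::int. 5 dvd r0^2 - D \<and> \<not> 5 dvd r0"
  proof (cases "D mod 5 = 1")
    case True
    then have "5 dvd 1 - D" by presburger
    then show ?thesis by (intro exI[of _ 1]) simp
  next
    case False
    then have "D mod 5 = 4" using assms by simp
    then have "5 dvd 4 - D" by presburger
    then show ?thesis by (intro exI[of _ 2]) simp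
  qed
  then obtain r0 :: int where "5 dvd r0^2 - D" "\<not> 5 dvd r0" by blast
  then show ?thesis using odd_square[OF test_prime(2)] by simp
qed

lemma real_sq: fixes D :: int assumes "squarefree D" shows "real_square D \<longleftrightarrow> D > 0"
proof
  have "D \<noteq> 0" using assms by auto
  assume "real_square D"
  then obtain r :: real where "r^2 = of_int D" unfolding real_square_def by blast
  then have "of_int D \<ge> (0::real)" by (metis zero_le_power2)
  then show "D > 0" using \<open>D \<noteq> 0\<close> by simp
next
  assume "D > 0"
  then have "(sqrt (of_int D))^2 = (of_int D :: real)" by simp
  then show "real_square D" unfolding real_square_def by blast
qed

lemma real_cd: fixes D :: int assumes "D \<noteq> 0" shows "CD_real_point D \<longleftrightarrow> D > 0"
proof
  assume "CD_real_point D"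
  then obtain x0 x1 x2 x3 x4 :: real where nz: "x0 \<noteq> 0 \<or> x1 \<noteq> 0 \<or> x2 \<noteq> 0 \<or> x3 \<noteq> 0 \<or> x4 \<noteq> 0" and
    f: "CD_f1 (of_int D) x0 x1 x2 x3 x4 = 0" "CD_f2 (of_int D) x0 x1 x2 x3 x4 = 0"
       "CD_f3 (of_int D) x0 x1 x2 x3 x4 = 0"
    unfolding CD_real_point_def by blast
  show "D > 0"
  proof (rule ccontr)
    assume "\<not> D > 0"
    then have dn: "real_of_int D < 0" using assms by simp
    have f3: "x2^2 - 2*real_of_int D*x3^2 + x4^2 = 0" using f(3) unfolding CD_f3_def .
    have "real_of_int D * x3^2 \<le> 0" using dn by (simp add: mult_nonpos_nonneg)
    then have z: "x2^2 = 0" "x4^2 = 0" "real_of_int D * x3^2 = 0"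
      using f3 zero_le_power2[of x2] zero_le_power2[of x4] by linarith+
    then have "x3 = 0" using dn by simp
    moreover have "x2 = 0" "x4 = 0" using z by simp_all
    moreover have "x1 = 0" using f(2) z unfolding CD_f2_def by simp
    moreover have "x0 = 0" using f(1) \<open>x1 = 0\<close> \<open>x2 = 0\<close> unfolding CD_f1_def by simp
    ultimately show False using nz by simp
  qed
next
  assume "D > 0"
  define s where "s = sqrt (real_of_int D)"
  have s2: "s^2 = real_of_int D" unfolding s_def using \<open>D > 0\<close> by simp
  have "CD_f1 (of_int D) s s s 1 s = 0" "CD_f2 (of_int D) s s s 1 s = 0" "CD_f3 (of_int D) s s s 1 s = 0"
    unfolding CD_f1_def CD_f2_def CD_f3_def using s2 by simp_all
  then show "CD_real_point D" unfolding CD_real_point_def by (intro exI[of _ s] exI[of _ 1]) auto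
qed

theorem lemma4p2:
  fixes D :: int
  assumes "squarefree D"
  shows "(CD_real_point D \<longleftrightarrow> real_square D) \<and> (real_square D \<longleftrightarrow> D > 0)
    \<and> (CD_padic_point 2 D \<longleftrightarrow> padic_square 2 D) \<and> (padic_square 2 D \<longleftrightarrow> D mod 8 = 1)
    \<and> (CD_padic_point 3 D \<longleftrightarrow> padic_square 3 D) \<and> (padic_square 3 D \<longleftrightarrow> D mod 3 = 1)
    \<and> (CD_padic_point 5 D \<longleftrightarrow> padic_square 5 D)
    \<and> (padic_square 5 D \<longleftrightarrow> D mod 5 = 1 \<or> D mod 5 = 4)"
proof -
  have "D \<noteq> 0" using assms by auto
  have a1: "real_square D \<longleftrightarrow> D > 0" by (rule real_sq[OF assms])
  have a2: "CD_real_point D \<longleftrightarrow> D > 0" by (rule real_cd[OF \<open>D \<noteq> 0\<close>])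
  have b1: "padic_square 2 D \<longleftrightarrow> D mod 8 = 1" using two_square psq2[OF assms] by blast
  have b2: "CD_padic_point 2 D \<longleftrightarrow> padic_square 2 D"
    using cd2[OF assms] two_square sq_to_cd[of 2 D] by force
  have c1: "padic_square 3 D \<longleftrightarrow> D mod 3 = 1" using sq3_cond psq3[OF assms] by blast
  have c2: "CD_padic_point 3 D \<longleftrightarrow> padic_square 3 D"
    using cd3[OF assms] sq3_cond sq_to_cd[of 3 D] by force
  have d1: "padic_square 5 D \<longleftrightarrow> D mod 5 = 1 \<or> D mod 5 = 4" using sq5_cond psq5[OF assms] by blast
  have d2: "CD_padic_point 5 D \<longleftrightarrow> padic_square 5 D"
    using cd5[OF assms] sq5_cond sq_to_cd[of 5 D] by force
  show ?thesis using a1 a2 b1 b2 c1 c2 d1 d2 by blast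
qed

end
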